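(* Let $M$ be a monoid of binary relations on a finite set $Q$ and let $e,e'\in M$ be $\mathcal D$-equivalent idempotents. Then the permutation groups $G_e$ and $G_{e'}$ are equivalent.
   Context: Monoid of relations: set of relations on $Q$ containing the identity and closed under composition $mn=\{(p,q)\mid\exists r,(p,r)\in m,(r,q)\in n\}$. $\mathcal D$ is Green's relation $\mathcal L\mathcal R=\mathcal R\mathcal L$ in $M$. For an idempotent $e$, $H(e)$ is its $\mathcal H$-class (a group with identity $e$, inverses denoted $m^{-1}$), $\Gamma_e$ is the set of strongly connected components of the restriction of $e$ to its fixed points $\{q\mid (q,q)\in e\}$, and for $m\in H(e)$, $\gamma_e(m)=\{(\rho,\sigma)\in\Gamma_e^2\mid (r,s)\in m,(s,r)\in m^{-1}\text{ for some }r\in\rho,s\in\sigma\}$; $\gamma_e$ is an injective morphism into permutations of $\Gamma_e$, and $G_e=\gamma_e(H(e))$, a permutation group on $\Gamma_e$. Two permutation groups $G$ on $S$ and $G'$ on $S'$ are equivalent if there are a bijection $\theta:S\to S'$ and a group isomorphism $\alpha:G\to G'$ with $\theta(g(s))=\alpha(g)(\theta(s))$ for all $g\in G$, $s\in S$. *)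

theory Defs
  imports Main
begin

text \<open>Relations on Q are sets of pairs; the product m n of the paper is m O n.\<close>

definition rel_monoid :: "'q set \<Rightarrow> ('q \<times> 'q) set set \<Rightarrow> bool" where
  "rel_monoid Q M \<longleftrightarrow> (\<forall>m\<in>M. m \<subseteq> Q \<times> Q) \<and> Id_on Q \<in> M \<and>
     (\<forall>m\<in>M. \<forall>n\<in>M. m O n \<in> M)"

definition greenL :: "('q \<times> 'q) set set \<Rightarrow> ('q \<times> 'q) set \<Rightarrow> ('q \<times> 'q) set \<Rightarrow> bool" where
  "greenL M m n \<longleftrightarrow> m \<in> M \<and> n \<in> M \<and> (\<exists>x\<in>M. m = x O n) \<and> (\<exists>y\<in>M. n = y O m)"

definition greenR :: "('q \<times> 'q) set set \<Rightarrow> ('q \<times> 'q) set \<Rightarrow> ('q \<times> 'q) set \<Rightarrow> bool" where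
  "greenR M m n \<longleftrightarrow> m \<in> M \<and> n \<in> M \<and> (\<exists>x\<in>M. m = n O x) \<and> (\<exists>y\<in>M. n = m O y)"

definition greenD :: "('q \<times> 'q) set set \<Rightarrow> ('q \<times> 'q) set \<Rightarrow> ('q \<times> 'q) set \<Rightarrow> bool" where
  "greenD M m n \<longleftrightarrow> (\<exists>k. greenL M m k \<and> greenR M k n)"

definition Hclass :: "('q \<times> 'q) set set \<Rightarrow> ('q \<times> 'q) set \<Rightarrow> ('q \<times> 'q) set set" where
  "Hclass M e = {m. greenL M m e \<and> greenR M m e}"

definition Hinv :: "('q \<times> 'q) set set \<Rightarrow> ('q \<times> 'q) set \<Rightarrow> ('q \<times> 'q) set \<Rightarrow> ('q \<times> 'q) set" where
  "Hinv M e m = (THE m'. m' \<in> Hclass M e \<and> m O m' = e \<and> m' O m = e)"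

definition fixpts :: "'q set \<Rightarrow> ('q \<times> 'q) set \<Rightarrow> 'q set" where
  "fixpts Q e = {q \<in> Q. (q, q) \<in> e}"

definition Gamma :: "'q set \<Rightarrow> ('q \<times> 'q) set \<Rightarrow> 'q set set" where
  "Gamma Q e = (let F = fixpts Q e; r = e \<inter> (F \<times> F) in
     {{q \<in> F. (p, q) \<in> r\<^sup>* \<and> (q, p) \<in> r\<^sup>*} | p. p \<in> F})"

definition gamma :: "'q set \<Rightarrow> ('q \<times> 'q) set set \<Rightarrow> ('q \<times> 'q) set \<Rightarrow> ('q \<times> 'q) set
    \<Rightarrow> ('q set \<times> 'q set) set" where
  "gamma Q M e m = {(\<rho>, \<sigma>). \<rho> \<in> Gamma Q e \<and> \<sigma> \<in> Gamma Q e \<and>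
     (\<exists>r\<in>\<rho>. \<exists>s\<in>\<sigma>. (r, s) \<in> m \<and> (s, r) \<in> Hinv M e m)}"

definition Ggroup :: "'q set \<Rightarrow> ('q \<times> 'q) set set \<Rightarrow> ('q \<times> 'q) set \<Rightarrow> ('q set \<times> 'q set) set set" where
  "Ggroup Q M e = gamma Q M e ` Hclass M e"

definition rapp :: "('a \<times> 'a) set \<Rightarrow> 'a \<Rightarrow> 'a" where
  "rapp g s = (THE t. (s, t) \<in> g)"

definition perm_group_equiv :: "('a \<times> 'a) set set \<Rightarrow> 'a set \<Rightarrow> ('b \<times> 'b) set set \<Rightarrow> 'b set \<Rightarrow> bool" where
  "perm_group_equiv G S G' S' \<longleftrightarrow> (\<exists>\<theta> \<alpha>. bij_betw \<theta> S S' \<and> bij_betw \<alpha> G G' \<and>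
     (\<forall>g\<in>G. \<forall>h\<in>G. \<alpha> (g O h) = \<alpha> g O \<alpha> h) \<and>
     (\<forall>g\<in>G. \<forall>s\<in>S. \<theta> (rapp g s) = rapp (\<alpha> g) (\<theta> s)))"

end

theory Submission
  imports Defs
begin

definition SCC :: "('q \<times> 'q) set \<Rightarrow> 'q \<Rightarrow> 'q set" where
  "SCC e p = {q. (p,q) \<in> e \<and> (q,p) \<in> e}"

lemma rtr_aux:
  assumes "(p,q) \<in> (e \<inter> X)\<^sup>*" "e O e \<subseteq> e"
  shows "p = q \<or> (p,q) \<in> e"
  using assms by (induction rule: rtrancl_induct) blast+

lemma Gamma_eq:
  assumes "e \<subseteq> Q \<times> Q" "e O e \<subseteq> e"
  shows "Gamma Q e = {SCC e p | p. (p,p) \<in> e}"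
proof -
  have key: "{q \<in> fixpts Q e. (p, q) \<in> (e \<inter> (fixpts Q e \<times> fixpts Q e))\<^sup>* \<and>
                 (q, p) \<in> (e \<inter> (fixpts Q e \<times> fixpts Q e))\<^sup>*} = SCC e p"
    if "(p,p) \<in> e" for p
  proof (intro set_eqI iffI)
    fix q assume q: "q \<in> {q \<in> fixpts Q e. (p, q) \<in> (e \<inter> (fixpts Q e \<times> fixpts Q e))\<^sup>* \<and>
                 (q, p) \<in> (e \<inter> (fixpts Q e \<times> fixpts Q e))\<^sup>*}"
    then show "q \<in> SCC e p" using rtr_aux[OF _ assms(2)] that
      unfolding SCC_def by blast
  next
    fix q assume q: "q \<in> SCC e p"
    then have pq: "(p,q) \<in> e" "(q,p) \<in> e" by (auto simp: SCC_def)
    then have "(q,q) \<in> e" using assms(2) by blast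
    moreover have "q \<in> Q" "p \<in> Q" using pq assms(1) by auto
    ultimately have F: "q \<in> fixpts Q e" "p \<in> fixpts Q e" using that by (auto simp: fixpts_def)
    then show "q \<in> {q \<in> fixpts Q e. (p, q) \<in> (e \<inter> (fixpts Q e \<times> fixpts Q e))\<^sup>* \<and>
                 (q, p) \<in> (e \<inter> (fixpts Q e \<times> fixpts Q e))\<^sup>*}"
      using pq by blast
  qed
  show ?thesis
    unfolding Gamma_def Let_def
  proof (intro set_eqI iffI)
    fix x assume "x \<in> {{q \<in> fixpts Q e. (p, q) \<in> (e \<inter> fixpts Q e \<times> fixpts Q e)\<^sup>* \<and>
                   (q, p) \<in> (e \<inter> fixpts Q e \<times> fixpts Q e)\<^sup>*} | p. p \<in> fixpts Q e}"
    then obtain p where "p \<in> fixpts Q e" and x: "x = {q \<in> fixpts Q e. (p, q) \<in> (e \<inter> fixpts Q e \<times> fixpts Q e)\<^sup>* \<and>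
                   (q, p) \<in> (e \<inter> fixpts Q e \<times> fixpts Q e)\<^sup>*}" by blast
    then have "(p,p) \<in> e" by (simp add: fixpts_def)
    then show "x \<in> {SCC e p | p. (p,p) \<in> e}" using key x by blast
  next
    fix x assume "x \<in> {SCC e p | p. (p,p) \<in> e}"
    then obtain p where p: "(p,p) \<in> e" "x = SCC e p" by blast
    then have "p \<in> fixpts Q e" using assms(1) by (auto simp: fixpts_def)
    then show "x \<in> {{q \<in> fixpts Q e. (p, q) \<in> (e \<inter> fixpts Q e \<times> fixpts Q e)\<^sup>* \<and>
                   (q, p) \<in> (e \<inter> fixpts Q e \<times> fixpts Q e)\<^sup>*} | p. p \<in> fixpts Q e}"
      using key[OF p(1)] p(2) by blast
  qed
qed

lemma SCC_mem:
  assumes "e O e \<subseteq> e" "(p,p) \<in> e" "r \<in> SCC e p"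
  shows "SCC e r = SCC e p"
  using assms unfolding SCC_def by blast

lemma SCC_self: "(p,p) \<in> e \<Longrightarrow> p \<in> SCC e p"
  by (simp add: SCC_def)

lemma SCC_two:
  assumes "e O e \<subseteq> e" "r \<in> SCC e p" "r' \<in> SCC e p"
  shows "(r,r') \<in> e"
  using assms unfolding SCC_def by blast

lemma Gamma_elem:
  assumes "e \<subseteq> Q \<times> Q" "e O e \<subseteq> e" "\<rho> \<in> Gamma Q e" "r \<in> \<rho>"
  shows "\<rho> = SCC e r" "(r,r) \<in> e"
proof -
  obtain p where p: "(p,p) \<in> e" "\<rho> = SCC e p" using assms Gamma_eq by blast
  then show "\<rho> = SCC e r" using SCC_mem[OF assms(2) p(1)] assms(4) by simp
  show "(r,r) \<in> e" using p assms(2,4) unfolding SCC_def by blast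
qed

lemma Gamma_ne:
  assumes "e \<subseteq> Q \<times> Q" "e O e \<subseteq> e" "\<rho> \<in> Gamma Q e"
  shows "\<exists>r. r \<in> \<rho>"
proof -
  obtain p where "(p,p) \<in> e" "\<rho> = SCC e p" using assms(3) unfolding Gamma_eq[OF assms(1,2)] by blast
  then show ?thesis using SCC_self by metis
qed

lemma SCC_in_Gamma:
  assumes "e \<subseteq> Q \<times> Q" "e O e \<subseteq> e" "(p,p) \<in> e"
  shows "SCC e p \<in> Gamma Q e"
  unfolding Gamma_eq[OF assms(1,2)] using assms(3) by blast

definition Link :: "'q set \<Rightarrow> ('q \<times> 'q) set \<Rightarrow> ('q \<times> 'q) set \<Rightarrow> ('q \<times> 'q) set \<Rightarrow> ('q \<times> 'q) set
   \<Rightarrow> ('q set \<times> 'q set) set" where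
  "Link Q e e' a b = {(\<rho>, \<sigma>). \<rho> \<in> Gamma Q e \<and> \<sigma> \<in> Gamma Q e' \<and>
     (\<exists>r\<in>\<rho>. \<exists>s\<in>\<sigma>. (r, s) \<in> a \<and> (s, r) \<in> b)}"

lemma gamma_Link: "gamma Q M e m = Link Q e e m (Hinv M e m)"
  by (simp add: gamma_def Link_def)

lemma Link_conv: "(\<rho>,\<sigma>) \<in> Link Q e e' a b \<longleftrightarrow> (\<sigma>,\<rho>) \<in> Link Q e' e b a"
  by (auto simp: Link_def)

lemma Link_sub: "(\<rho>,\<sigma>) \<in> Link Q e e' a b \<Longrightarrow> \<rho> \<in> Gamma Q e \<and> \<sigma> \<in> Gamma Q e'"
  by (auto simp: Link_def)

lemma Link_total:
  assumes "e \<subseteq> Q \<times> Q" "e O e \<subseteq> e" "e' \<subseteq> Q \<times> Q" "e' O e' \<subseteq> e'"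
    "a O b = e" "b O a = e'" "\<rho> \<in> Gamma Q e"
  shows "\<exists>\<sigma>. (\<rho>,\<sigma>) \<in> Link Q e e' a b"
proof -
  obtain p where p: "p \<in> \<rho>" using Gamma_ne[OF assms(1,2,7)] by blast
  have pp: "(p,p) \<in> e" and rho: "\<rho> = SCC e p" using Gamma_elem[OF assms(1,2,7) p] by auto
  then obtain s where s: "(p,s) \<in> a" "(s,p) \<in> b" using assms(5) by blast
  then have ss: "(s,s) \<in> e'" using assms(6) by blast
  have "(\<rho>, SCC e' s) \<in> Link Q e e' a b"
    unfolding Link_def using SCC_in_Gamma[OF assms(3,4) ss] SCC_self[OF ss] assms(7) p s by blast
  then show ?thesis by blast
qed

lemma Link_fun:
  assumes "e \<subseteq> Q \<times> Q" "e O e \<subseteq> e" "e' \<subseteq> Q \<times> Q" "e' O e' \<subseteq> e'"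
    "b O e = b" "b O a = e'"
    "(\<rho>,\<sigma>1) \<in> Link Q e e' a b" "(\<rho>,\<sigma>2) \<in> Link Q e e' a b"
  shows "\<sigma>1 = \<sigma>2"
proof -
  obtain r1 s1 where 1: "r1 \<in> \<rho>" "s1 \<in> \<sigma>1" "(r1,s1) \<in> a" "(s1,r1) \<in> b"
    "\<rho> \<in> Gamma Q e" "\<sigma>1 \<in> Gamma Q e'" using assms(7) by (auto simp: Link_def)
  obtain r2 s2 where 2: "r2 \<in> \<rho>" "s2 \<in> \<sigma>2" "(r2,s2) \<in> a" "(s2,r2) \<in> b"
    "\<sigma>2 \<in> Gamma Q e'" using assms(8) by (auto simp: Link_def)
  have rho: "\<rho> = SCC e r1" "(r1,r1) \<in> e" using Gamma_elem[OF assms(1,2) 1(5,1)] by auto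
  have r12: "(r1,r2) \<in> e" "(r2,r1) \<in> e" using SCC_two[OF assms(2)] rho 1(1) 2(1) by metis+
  have "(s1,s2) \<in> (b O e) O a" using 1 2 r12 by blast
  then have s12: "(s1,s2) \<in> e'" using assms(5,6) by simp
  have "(s2,s1) \<in> (b O e) O a" using 1 2 r12 by blast
  then have s21: "(s2,s1) \<in> e'" using assms(5,6) by simp
  have "\<sigma>1 = SCC e' s1" "(s1,s1) \<in> e'" using Gamma_elem[OF assms(3,4) 1(6,2)] by auto
  moreover have "\<sigma>2 = SCC e' s2" using Gamma_elem[OF assms(3,4) 2(5,2)] by auto
  moreover have "s2 \<in> SCC e' s1" using s12 s21 by (simp add: SCC_def)
  ultimately show ?thesis using SCC_mem[OF assms(4)] by metis
qed

lemma Link_comp: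
  assumes "e' \<subseteq> Q \<times> Q" "e' O e' \<subseteq> e'" "a O e' = a" "e' O b = b"
    "(\<rho>,\<sigma>) \<in> Link Q e e' a b" "(\<sigma>,\<tau>) \<in> Link Q e' e'' c d"
  shows "(\<rho>,\<tau>) \<in> Link Q e e'' (a O c) (d O b)"
proof -
  obtain r s where 1: "r \<in> \<rho>" "s \<in> \<sigma>" "(r,s) \<in> a" "(s,r) \<in> b"
    "\<rho> \<in> Gamma Q e" "\<sigma> \<in> Gamma Q e'" using assms(5) by (auto simp: Link_def)
  obtain s' t where 2: "s' \<in> \<sigma>" "t \<in> \<tau>" "(s',t) \<in> c" "(t,s') \<in> d"
    "\<tau> \<in> Gamma Q e''" using assms(6) by (auto simp: Link_def)
  have "\<sigma> = SCC e' s" using Gamma_elem[OF assms(1,2) 1(6,2)] by auto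
  then have ss: "(s,s') \<in> e'" "(s',s) \<in> e'" using 2(1) by (auto simp: SCC_def)
  have "(r,t) \<in> (a O e') O c" using 1 2 ss by blast
  then have "(r,t) \<in> a O c" using assms(3) by simp
  moreover have "(t,r) \<in> d O (e' O b)" using 1 2 ss by blast
  then have "(t,r) \<in> d O b" using assms(4) by simp
  ultimately show ?thesis using 1 2 unfolding Link_def by blast
qed


lemma H_basic:
  assumes "h \<in> Hclass M e" "e O e = e"
  shows "h \<in> M" "e \<in> M" "h O e = h" "e O h = h"
proof -
  from assms(1) have L: "greenL M h e" and R: "greenR M h e" by (auto simp: Hclass_def)
  then show "h \<in> M" "e \<in> M" by (auto simp: greenL_def)
  from L obtain x where "h = x O e" by (auto simp: greenL_def)
  then show "h O e = h" using assms(2) by (simp add: O_assoc)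
  from R obtain x where "h = e O x" by (auto simp: greenR_def)
  then show "e O h = h" using assms(2) by (metis O_assoc)
qed

lemma Hinv_unique:
  assumes "g \<in> Hclass M e" "g' \<in> Hclass M e" "g O g' = e" "g' O g = e" "e O e = e"
  shows "Hinv M e g = g'"
  unfolding Hinv_def
proof (rule the_equality)
  show "g' \<in> Hclass M e \<and> g O g' = e \<and> g' O g = e" using assms by simp
  fix g'' assume h: "g'' \<in> Hclass M e \<and> g O g'' = e \<and> g'' O g = e"
  have "g'' = g'' O e" using H_basic[of g'' M e] h assms(5) by simp
  also have "\<dots> = (g'' O g) O g'" using assms(3) by (simp add: O_assoc)
  also have "\<dots> = g'" using h H_basic[OF assms(2,5)] by simp
  finally show "g'' = g'" .
qed

lemma Hinv_props:
  assumes cl: "\<forall>m\<in>M. \<forall>n\<in>M. m O n \<in> M" and "e O e = e" "h \<in> Hclass M e"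
  shows "Hinv M e h \<in> Hclass M e \<and> h O Hinv M e h = e \<and> Hinv M e h O h = e"
proof -
  from assms(3) have L: "greenL M h e" and R: "greenR M h e" by (auto simp: Hclass_def)
  from L obtain y where y: "y \<in> M" "y O h = e" by (auto simp: greenL_def)
  from R obtain y' where y': "y' \<in> M" "h O y' = e" by (auto simp: greenR_def)
  note hb = H_basic[OF assms(3,2)]
  have eq: "y O e = e O y'"
  proof -
    have "y O e = y O (h O y')" using y' by simp
    also have "\<dots> = (y O h) O y'" by (simp add: O_assoc)
    finally show ?thesis using y by simp
  qed
  define h' where "h' = y O e"
  have h'M: "h' \<in> M" using cl y hb unfolding h'_def by blast
  have 1: "h O h' = e"
  proof -
    have "h O h' = h O (e O y')" unfolding h'_def eq ..
    also have "\<dots> = (h O e) O y'" by (simp add: O_assoc)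
    finally show ?thesis using hb y' by simp
  qed
  have 2: "h' O h = e"
  proof -
    have "h' O h = y O (e O h)" unfolding h'_def by (simp add: O_assoc)
    then show ?thesis using hb y by simp
  qed
  have 3: "h' = e O y'" using eq h'_def by simp
  have "greenL M h' e" unfolding greenL_def
  proof (intro conjI)
    show "h' \<in> M" "e \<in> M" using h'M hb by auto
    show "\<exists>x\<in>M. h' = x O e" using h'_def y(1) by (intro bexI[of _ y])
    show "\<exists>x\<in>M. e = x O h'" using 1 hb(1) by (intro bexI[of _ h]) simp_all
  qed
  moreover have "greenR M h' e" unfolding greenR_def
  proof (intro conjI)
    show "h' \<in> M" "e \<in> M" using h'M hb by auto
    show "\<exists>x\<in>M. h' = e O x" using 3 y'(1) by (intro bexI[of _ y'])
    show "\<exists>x\<in>M. e = h' O x" using 2 hb(1) by (intro bexI[of _ h]) simp_all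
  qed
  ultimately have H: "h' \<in> Hclass M e" by (simp add: Hclass_def)
  have "Hinv M e h = h'" using Hinv_unique[OF assms(3) H 1 2 assms(2)] .
  then show ?thesis using H 1 2 by simp
qed


lemma comp_cancel: "a O b = c \<Longrightarrow> a O (b O x) = c O x"
  by (simp add: O_assoc[symmetric])

lemma phi_prod:
  assumes "u O v = e" "h O e = h"
  shows "(v O h O u) O (v O h' O u) = v O (h O h') O u"
proof -
  have "(v O h O u) O (v O h' O u) = v O (h O (u O (v O (h' O u))))" by (simp add: O_assoc)
  also have "\<dots> = v O (h O (e O (h' O u)))" by (simp add: comp_cancel[OF assms(1)])
  also have "\<dots> = v O ((h O e) O (h' O u))" by (simp add: O_assoc)
  also have "\<dots> = v O (h O h') O u" using assms(2) by (simp add: O_assoc)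
  finally show ?thesis .
qed

lemma phi_H:
  assumes cl: "\<forall>m\<in>M. \<forall>n\<in>M. m O n \<in> M" and ee: "e O e = e" and e'M: "e' \<in> M"
    and uM: "u \<in> M" and vM: "v \<in> M"
    and uv: "u O v = e" and vu: "v O u = e'" and eu: "e O u = u" and ue': "u O e' = u"
    and ve: "v O e = v" and e'v: "e' O v = v"
    and h: "h \<in> Hclass M e" and h': "h' \<in> Hclass M e" and hh': "h O h' = e" and h'h: "h' O h = e"
  shows "v O h O u \<in> Hclass M e' \<and> (v O h O u) O (v O h' O u) = e'"
proof -
  note hb = H_basic[OF h ee] and hb' = H_basic[OF h' ee]
  have gM: "v O h O u \<in> M" using cl uM vM hb by blast
  have g'M: "v O h' O u \<in> M" using cl uM vM hb' by blast
  have p1: "(v O h O u) O (v O h' O u) = e'"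
    using phi_prod[OF uv hb(3), of h'] hh' eu vu by simp
  have p2: "(v O h' O u) O (v O h O u) = e'"
    using phi_prod[OF uv hb'(3), of h] h'h eu vu by simp
  have r1: "v O h O u = (v O h O u) O e'" using ue' by (simp add: O_assoc)
  have r2: "v O h O u = e' O (v O h O u)" using e'v by (simp add: O_assoc[symmetric])
  have "greenL M (v O h O u) e'" unfolding greenL_def
  proof (intro conjI)
    show "v O h O u \<in> M" "e' \<in> M" using gM e'M by auto
    show "\<exists>x\<in>M. v O h O u = x O e'" using r1 gM by (intro bexI[of _ "v O h O u"])
    show "\<exists>x\<in>M. e' = x O (v O h O u)" using p2 g'M by (intro bexI[of _ "v O h' O u"]) simp_all
  qed
  moreover have "greenR M (v O h O u) e'" unfolding greenR_def
  proof (intro conjI)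
    show "v O h O u \<in> M" "e' \<in> M" using gM e'M by auto
    show "\<exists>x\<in>M. v O h O u = e' O x" using r2 gM by (intro bexI[of _ "v O h O u"])
    show "\<exists>x\<in>M. e' = (v O h O u) O x" using p1 g'M by (intro bexI[of _ "v O h' O u"]) simp_all
  qed
  ultimately show ?thesis using p1 by (simp add: Hclass_def)
qed

lemma rapp_eq:
  assumes a1: "(x,y) \<in> g" and a2: "\<And>z. (x,z) \<in> g \<Longrightarrow> z = y"
  shows "rapp g x = y"
  unfolding rapp_def
proof (rule the_equality)
  show "(x, y) \<in> g" by (rule a1)
  fix z assume "(x, z) \<in> g" then show "z = y" by (rule a2)
qed

lemma img_comp:
  assumes "inj_on f A" "g \<subseteq> A \<times> A" "h \<subseteq> A \<times> A"
  shows "map_prod f f ` (g O h) = map_prod f f ` g O map_prod f f ` h"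
proof (intro set_eqI iffI)
  fix p assume "p \<in> map_prod f f ` (g O h)"
  then show "p \<in> map_prod f f ` g O map_prod f f ` h" by force
next
  fix p assume "p \<in> map_prod f f ` g O map_prod f f ` h"
  then obtain a b b' c where 1: "(a,b) \<in> g" "(b',c) \<in> h" "f b = f b'" "p = (f a, f c)" by force
  then have "b \<in> A" "b' \<in> A" using assms(2,3) by auto
  then have "b = b'" using 1(3) assms(1) by (simp add: inj_on_eq_iff)
  then show "p \<in> map_prod f f ` (g O h)" using 1 by force
qed


theorem mainTheorem9:
  fixes Q :: "'q set" and M :: "('q \<times> 'q) set set" and e e' :: "('q \<times> 'q) set"
  assumes "finite Q" and "rel_monoid Q M"
    and "e \<in> M" and "e' \<in> M" and "e O e = e" and "e' O e' = e'"
    and "greenD M e e'"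
  shows "perm_group_equiv (Ggroup Q M e) (Gamma Q e) (Ggroup Q M e') (Gamma Q e')"
proof -
  note eM = assms(3) and e'M = assms(4) and ee = assms(5) and e'e' = assms(6)
  have cl: "\<forall>m\<in>M. \<forall>n\<in>M. m O n \<in> M" and sub: "\<forall>m\<in>M. m \<subseteq> Q \<times> Q"
    using assms(2) by (auto simp: rel_monoid_def)
  have eQ: "e \<subseteq> Q \<times> Q" and e'Q: "e' \<subseteq> Q \<times> Q" using sub eM e'M by auto
  have te: "e O e \<subseteq> e" and te': "e' O e' \<subseteq> e'" using ee e'e' by auto
  obtain k where L: "greenL M e k" and R: "greenR M k e'" using assms(7) by (auto simp: greenD_def)
  obtain x where x: "x \<in> M" "x O k = e" using L by (auto simp: greenL_def)
  obtain y where y: "y \<in> M" "y O e = k" using L by (auto simp: greenL_def)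
  obtain z where z: "z \<in> M" "e' O z = k" using R by (auto simp: greenR_def)
  obtain w where w: "w \<in> M" "k O w = e'" using R by (auto simp: greenR_def)
  have kM: "k \<in> M" using L by (auto simp: greenL_def)
  have ke: "k O e = k"
  proof -
    have "k O e = y O (e O e)" using y(2) by (auto simp: O_assoc)
    then show ?thesis using ee y(2) by simp
  qed
  have e'k: "e' O k = k"
  proof -
    have "e' O k = (e' O e') O z" using z(2) by (auto simp: O_assoc)
    then show ?thesis using e'e' z(2) by simp
  qed
  have ewk: "e O (w O k) = e"
  proof -
    have "e O (w O k) = x O ((k O w) O k)" using x(2) by (auto simp: O_assoc)
    also have "\<dots> = x O k" using w(2) e'k by simp
    finally show ?thesis using x(2) by simp
  qed
  define u where "u = e O w"
  define v where "v = k"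
  have uM: "u \<in> M" using cl eM w(1) u_def by blast
  have vM: "v \<in> M" using kM v_def by simp
  have uv: "u O v = e" unfolding u_def v_def using ewk by (simp add: O_assoc)
  have vu: "v O u = e'" unfolding u_def v_def using ke w(2) by (simp add: O_assoc[symmetric])
  have eu: "e O u = u" unfolding u_def using ee by (simp add: O_assoc[symmetric])
  have ue': "u O e' = u"
  proof -
    have "u O e' = (e O (w O k)) O w" unfolding u_def using w(2) by (auto simp: O_assoc)
    then show ?thesis using ewk u_def by simp
  qed
  have ve: "v O e = v" using ke v_def by simp
  have e'v: "e' O v = v" using e'k v_def by simp

  define \<Gamma> where "\<Gamma> = Gamma Q e"
  define \<Gamma>' where "\<Gamma>' = Gamma Q e'"
  define LL where "LL = Link Q e e' u v"
  define \<theta> where "\<theta> = (\<lambda>\<rho>. THE \<sigma>. (\<rho>,\<sigma>) \<in> LL)"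
  have Ltot: "\<exists>\<sigma>. (\<rho>,\<sigma>) \<in> LL" if "\<rho> \<in> \<Gamma>" for \<rho>
    using Link_total[OF eQ te e'Q te' uv vu] that \<Gamma>_def LL_def by simp
  have Lfun: "\<sigma>1 = \<sigma>2" if "(\<rho>,\<sigma>1) \<in> LL" "(\<rho>,\<sigma>2) \<in> LL" for \<rho> \<sigma>1 \<sigma>2
    using Link_fun[OF eQ te e'Q te' ve vu] that LL_def by simp
  have L'tot: "\<exists>\<rho>. (\<rho>,\<sigma>) \<in> LL" if "\<sigma> \<in> \<Gamma>'" for \<sigma>
    using Link_total[OF e'Q te' eQ te vu uv] that \<Gamma>'_def LL_def Link_conv by blast
  have L'fun: "\<rho>1 = \<rho>2" if "(\<rho>1,\<sigma>) \<in> LL" "(\<rho>2,\<sigma>) \<in> LL" for \<rho>1 \<rho>2 \<sigma>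
    using Link_fun[OF e'Q te' eQ te ue' uv] that LL_def Link_conv by blast
  have \<theta>rel: "(\<rho>, \<theta> \<rho>) \<in> LL" if rG: "\<rho> \<in> \<Gamma>" for \<rho>
  proof -
    obtain \<sigma> where s: "(\<rho>,\<sigma>) \<in> LL" using Ltot[OF rG] by blast
    have "\<theta> \<rho> = \<sigma>" unfolding \<theta>_def using s Lfun by (intro the_equality) auto
    then show ?thesis using s by simp
  qed
  have \<theta>eq: "\<theta> \<rho> = \<sigma>" if "(\<rho>,\<sigma>) \<in> LL" for \<rho> \<sigma>
    unfolding \<theta>_def using that Lfun by (intro the_equality) auto
  have LLsub: "\<rho> \<in> \<Gamma> \<and> \<sigma> \<in> \<Gamma>'" if "(\<rho>,\<sigma>) \<in> LL" for \<rho> \<sigma>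
    using Link_sub that LL_def \<Gamma>_def \<Gamma>'_def by blast
  have bij\<theta>: "bij_betw \<theta> \<Gamma> \<Gamma>'"
  proof (rule bij_betw_imageI)
    show "inj_on \<theta> \<Gamma>"
    proof (rule inj_onI)
      fix a b assume "a \<in> \<Gamma>" "b \<in> \<Gamma>" "\<theta> a = \<theta> b"
      then show "a = b" using \<theta>rel L'fun by metis
    qed
    show "\<theta> ` \<Gamma> = \<Gamma>'"
    proof (intro set_eqI iffI)
      fix s assume "s \<in> \<theta> ` \<Gamma>" then show "s \<in> \<Gamma>'" using \<theta>rel LLsub by blast
    next
      fix s assume "s \<in> \<Gamma>'"
      then obtain r where "(r,s) \<in> LL" using L'tot by blast
      then show "s \<in> \<theta> ` \<Gamma>" using \<theta>eq LLsub by blast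
    qed
  qed

  define \<alpha> where "\<alpha> = (\<lambda>g. map_prod \<theta> \<theta> ` g)"
  define \<phi> where "\<phi> = (\<lambda>h. v O h O u)"
  have hfacts: "Hinv M e h \<in> Hclass M e \<and> h O Hinv M e h = e \<and> Hinv M e h O h = e"
    if "h \<in> Hclass M e" for h using Hinv_props[OF cl ee that] .
  have phiH: "\<phi> h \<in> Hclass M e' \<and> Hinv M e' (\<phi> h) = \<phi> (Hinv M e h)"
    if h: "h \<in> Hclass M e" for h
  proof -
    have hi1: "Hinv M e h \<in> Hclass M e" and hi2: "h O Hinv M e h = e" and hi3: "Hinv M e h O h = e"
      using hfacts[OF h] by auto
    have 1: "\<phi> h \<in> Hclass M e' \<and> \<phi> h O \<phi> (Hinv M e h) = e'"
      unfolding \<phi>_def by (rule phi_H[OF cl ee e'M uM vM uv vu eu ue' ve e'v h hi1 hi2 hi3])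
    have 2: "\<phi> (Hinv M e h) \<in> Hclass M e' \<and> \<phi> (Hinv M e h) O \<phi> h = e'"
      unfolding \<phi>_def by (rule phi_H[OF cl ee e'M uM vM uv vu eu ue' ve e'v hi1 h hi3 hi2])
    show ?thesis using 1 2 Hinv_unique[of "\<phi> h" M e' "\<phi> (Hinv M e h)"] e'e' by blast
  qed
  have phisurj: "\<exists>h\<in>Hclass M e. \<phi> h = g" if g: "g \<in> Hclass M e'" for g
  proof -
    have gi1: "Hinv M e' g \<in> Hclass M e'" and gi2: "g O Hinv M e' g = e'" and gi3: "Hinv M e' g O g = e'"
      using Hinv_props[OF cl e'e' g] by auto
    have "u O g O v \<in> Hclass M e"
      using phi_H[OF cl e'e' eM vM uM vu uv e'v ve ue' eu g gi1 gi2 gi3] by blast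
    moreover have "\<phi> (u O g O v) = g"
    proof -
      have "\<phi> (u O g O v) = (v O u) O g O (v O u)" unfolding \<phi>_def by (simp add: O_assoc)
      then show ?thesis using vu H_basic[OF g e'e'] by simp
    qed
    ultimately show ?thesis by blast
  qed
  have Gfun: "\<sigma>1 = \<sigma>2" if "h \<in> Hclass M e" "(\<rho>,\<sigma>1) \<in> gamma Q M e h" "(\<rho>,\<sigma>2) \<in> gamma Q M e h"
    for h \<rho> \<sigma>1 \<sigma>2
  proof -
    note hi = hfacts[OF that(1)]
    have "Hinv M e h O e = Hinv M e h" using H_basic[of "Hinv M e h" M e] hi ee by blast
    then show ?thesis using Link_fun[OF eQ te eQ te, of "Hinv M e h" h] hi that gamma_Link by metis
  qed
  have Gtot: "\<exists>\<sigma>. (\<rho>,\<sigma>) \<in> gamma Q M e h" if "h \<in> Hclass M e" "\<rho> \<in> \<Gamma>" for h \<rho>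
    using Link_total[OF eQ te eQ te, of h "Hinv M e h"] hfacts[OF that(1)] that(2) \<Gamma>_def gamma_Link
    by metis
  have G'fun: "\<sigma>1 = \<sigma>2" if "h \<in> Hclass M e" "(\<rho>,\<sigma>1) \<in> gamma Q M e' (\<phi> h)"
     "(\<rho>,\<sigma>2) \<in> gamma Q M e' (\<phi> h)" for h \<rho> \<sigma>1 \<sigma>2
  proof -
    note ph = phiH[OF that(1)]
    have hi1: "Hinv M e h \<in> Hclass M e" and hi2: "h O Hinv M e h = e" and hi3: "Hinv M e h O h = e"
      using hfacts[OF that(1)] by auto
    have ac: "\<phi> (Hinv M e h) \<in> Hclass M e' \<and> \<phi> (Hinv M e h) O \<phi> h = e'"
      unfolding \<phi>_def by (rule phi_H[OF cl ee e'M uM vM uv vu eu ue' ve e'v hi1 that(1) hi3 hi2])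
    then have a: "\<phi> (Hinv M e h) \<in> Hclass M e'" and c: "\<phi> (Hinv M e h) O \<phi> h = e'" by auto
    have b: "\<phi> (Hinv M e h) O e' = \<phi> (Hinv M e h)" using H_basic[OF a e'e'] by blast
    show ?thesis using Link_fun[OF e'Q te' e'Q te' b c] that(2,3) ph gamma_Link by metis
  qed
  have conj: "(\<theta> \<rho>, \<theta> \<sigma>) \<in> gamma Q M e' (\<phi> h)"
    if h: "h \<in> Hclass M e" and rs: "(\<rho>,\<sigma>) \<in> gamma Q M e h" for h \<rho> \<sigma>
  proof -
    note hi = hfacts[OF h]
    note hb = H_basic[OF h ee]
    have hib: "e O Hinv M e h = Hinv M e h" using H_basic[of "Hinv M e h" M e] hi ee by blast
    have rs': "(\<rho>,\<sigma>) \<in> Link Q e e h (Hinv M e h)" using rs gamma_Link by metis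
    have inG: "\<rho> \<in> \<Gamma>" "\<sigma> \<in> \<Gamma>" using Link_sub[OF rs'] \<Gamma>_def by auto
    have 1: "(\<theta> \<rho>, \<rho>) \<in> Link Q e' e v u" using \<theta>rel[OF inG(1)] LL_def Link_conv by blast
    have 2: "(\<theta> \<rho>, \<sigma>) \<in> Link Q e' e (v O h) (Hinv M e h O u)"
      using Link_comp[OF eQ te ve eu 1 rs'] .
    have 3: "(\<sigma>, \<theta> \<sigma>) \<in> Link Q e e' u v" using \<theta>rel[OF inG(2)] LL_def by simp
    have c1: "(v O h) O e = v O h" using hb by (simp add: O_assoc)
    have c2: "e O (Hinv M e h O u) = Hinv M e h O u" using hib by (simp add: O_assoc[symmetric])
    have "(\<theta> \<rho>, \<theta> \<sigma>) \<in> Link Q e' e' ((v O h) O u) (v O (Hinv M e h O u))"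
      using Link_comp[OF eQ te c1 c2 2 3] .
    then show ?thesis using phiH[OF h] gamma_Link[of Q M e' "\<phi> h"] \<phi>_def by (simp add: O_assoc)
  qed
  have Gsub: "gamma Q M e h \<subseteq> \<Gamma> \<times> \<Gamma>" for h
    using Link_sub gamma_Link \<Gamma>_def by (metis subrelI mem_Sigma_iff)
  have G'sub: "gamma Q M e' g \<subseteq> \<Gamma>' \<times> \<Gamma>'" for g
    using Link_sub gamma_Link \<Gamma>'_def by (metis subrelI mem_Sigma_iff)
  have alpha_gamma: "\<alpha> (gamma Q M e h) = gamma Q M e' (\<phi> h)" if h: "h \<in> Hclass M e" for h
  proof (intro set_eqI iffI)
    fix p assume "p \<in> \<alpha> (gamma Q M e h)"
    then obtain a b where "(a,b) \<in> gamma Q M e h" "p = (\<theta> a, \<theta> b)" unfolding \<alpha>_def by auto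
    then show "p \<in> gamma Q M e' (\<phi> h)" using conj[OF h] by simp
  next
    fix p assume p: "p \<in> gamma Q M e' (\<phi> h)"
    obtain a b where ab0: "p = (a,b)" by (cases p)
    have "a \<in> \<Gamma>'" using G'sub[of "\<phi> h"] p ab0 by blast
    note ab = ab0 this
    then obtain r where r: "r \<in> \<Gamma>" "\<theta> r = a" using bij\<theta> by (metis bij_betw_imp_surj_on imageE)
    obtain s where s: "(r,s) \<in> gamma Q M e h" using Gtot[OF h r(1)] by blast
    have "(a, \<theta> s) \<in> gamma Q M e' (\<phi> h)" using conj[OF h s] r by simp
    then have "b = \<theta> s" using G'fun[OF h] p ab by blast
    then show "p \<in> \<alpha> (gamma Q M e h)" unfolding \<alpha>_def using ab r s by force
  qed
  have inj\<theta>: "inj_on \<theta> \<Gamma>" using bij\<theta> bij_betw_def by blast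
  have injP: "inj_on (map_prod \<theta> \<theta>) (\<Gamma> \<times> \<Gamma>)" using map_prod_inj_on[OF inj\<theta> inj\<theta>] .
  show ?thesis
    unfolding perm_group_equiv_def
  proof (intro exI conjI)
    show "bij_betw \<theta> (Gamma Q e) (Gamma Q e')" using bij\<theta> \<Gamma>_def \<Gamma>'_def by simp
    show "bij_betw \<alpha> (Ggroup Q M e) (Ggroup Q M e')"
    proof (rule bij_betw_imageI)
      show "inj_on \<alpha> (Ggroup Q M e)"
      proof (rule inj_onI)
        fix g1 g2 assume "g1 \<in> Ggroup Q M e" "g2 \<in> Ggroup Q M e" "\<alpha> g1 = \<alpha> g2"
        moreover have "g1 \<subseteq> \<Gamma> \<times> \<Gamma>" "g2 \<subseteq> \<Gamma> \<times> \<Gamma>"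
          using calculation(1,2) Gsub unfolding Ggroup_def by auto
        ultimately show "g1 = g2" using inj_on_image_eq_iff[OF injP] \<alpha>_def by metis
      qed
      show "\<alpha> ` Ggroup Q M e = Ggroup Q M e'"
      proof (intro set_eqI iffI)
        fix g assume "g \<in> \<alpha> ` Ggroup Q M e"
        then obtain h where "h \<in> Hclass M e" "g = \<alpha> (gamma Q M e h)" unfolding Ggroup_def by auto
        then show "g \<in> Ggroup Q M e'" using alpha_gamma phiH unfolding Ggroup_def by auto
      next
        fix g assume "g \<in> Ggroup Q M e'"
        then obtain h' where h': "h' \<in> Hclass M e'" "g = gamma Q M e' h'" unfolding Ggroup_def by auto
        then obtain h where "h \<in> Hclass M e" "\<phi> h = h'" using phisurj by blast
        then show "g \<in> \<alpha> ` Ggroup Q M e" using alpha_gamma h' unfolding Ggroup_def by auto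
      qed
    qed
    show "\<forall>g\<in>Ggroup Q M e. \<forall>h\<in>Ggroup Q M e. \<alpha> (g O h) = \<alpha> g O \<alpha> h"
    proof (intro ballI)
      fix g h assume "g \<in> Ggroup Q M e" "h \<in> Ggroup Q M e"
      then have "g \<subseteq> \<Gamma> \<times> \<Gamma>" "h \<subseteq> \<Gamma> \<times> \<Gamma>" using Gsub unfolding Ggroup_def by auto
      then show "\<alpha> (g O h) = \<alpha> g O \<alpha> h" unfolding \<alpha>_def by (rule img_comp[OF inj\<theta>])
    qed
    show "\<forall>g\<in>Ggroup Q M e. \<forall>s\<in>Gamma Q e. \<theta> (rapp g s) = rapp (\<alpha> g) (\<theta> s)"
    proof (intro ballI)
      fix g s assume g: "g \<in> Ggroup Q M e" and s: "s \<in> Gamma Q e"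
      then obtain h where h: "h \<in> Hclass M e" "g = gamma Q M e h" unfolding Ggroup_def by auto
      obtain t where t: "(s,t) \<in> g" using Gtot[OF h(1)] s h(2) \<Gamma>_def by blast
      have rt: "rapp g s = t" using t Gfun[OF h(1)] h(2) by (intro rapp_eq) auto
      have ag: "\<alpha> g = gamma Q M e' (\<phi> h)" using alpha_gamma[OF h(1)] h(2) by simp
      have "(\<theta> s, \<theta> t) \<in> \<alpha> g" using conj[OF h(1)] t h(2) ag by simp
      then have "rapp (\<alpha> g) (\<theta> s) = \<theta> t" using G'fun[OF h(1)] ag by (intro rapp_eq) auto
      then show "\<theta> (rapp g s) = rapp (\<alpha> g) (\<theta> s)" using rt by simp
    qed
  qed
qed

end
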